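(* Let $\vartheta=\vartheta_{\{a,b,c\}}^{\mathcal B,h}$ be a $3$-molecule with base $\{a,b,c\}$ and further vertices $v_1,\dots,v_h$, and let $C_3$ be the $3$-cycle on vertices $\{a,v_1,z\}$, where $z$ is a new vertex. Let $G=C_3+_{av_1}\vartheta$ be the $2$-sum of $C_3$ and $\vartheta$ along the edge $av_1$ (present in both). If $\{a,v_1\}$ is not contained in any minimal edge cover set of $\vartheta$, then $\mathrm{Ent}(G)\ge4$.
   Context: Graphs are finite and undirected; connectivity of a graph is the largest $k$ such that one must remove at least $k$ vertices to disconnect it (by convention $K_m$, $m\ge3$, has connectivity $m-1$). $3$-molecule: for $h\ge1$, base $\{a,b,c\}$ and a set $\mathcal B$ of edges among $a,b,c$, $\vartheta_{\{a,b,c\}}^{\mathcal B,h}$ has vertex set $\{a,b,c,v_1,\dots,v_h\}$ and edge set $\mathcal B\cup\{v_ix:1\le i\le h,\ x\in\{a,b,c\}\}$, with the requirement $h\ge 3-k'$, $k'$ the connectivity of the subgraph induced by $\{a,b,c\}$. $2$-sum: for graphs $G_1,G_2$ and edges $e_1=a_1b_1\in E_{G_1}$, $e_2=a_2b_2\in E_{G_2}$, $G_1+_{e_1e_2}G_2$ is obtained from the disjoint union by identifying $a_1$ with $a_2$ and $b_1$ with $b_2$ and deleting $e_1$ and $e_2$ (here the edge $av_1$ of $C_3$ is identified with the edge $av_1$ of $\vartheta$). An edge cover set is a set of vertices containing an endpoint of every edge; a minimal edge cover set means one of minimum cardinality (for a $3$-molecule this cardinality is $3$). Entanglement: in the game $\mathrm{Ent}(G,k)$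 Thief plays against $k$ cops. Initially no cop is placed and Thief picks a vertex. Each round, Cops may do nothing, place a new cop (at most $k$ in total) on Thief's current vertex, or move a placed cop to Thief's current vertex; then Thief must move along an edge to an adjacent vertex not occupied by a cop, and is caught if he cannot. Infinite plays are won by Thief. $\mathrm{Ent}(G)$ is the least $k$ for which Cops have a winning strategy. *)

theory Defs
  imports Main
begin

definition edge_rel :: "'a set \<Rightarrow> 'a set set \<Rightarrow> ('a \<times> 'a) set" where
  "edge_rel V E = {(x, y). x \<in> V \<and> y \<in> V \<and> x \<noteq> y \<and> {x, y} \<in> E}"

definition connected_graph :: "'a set \<Rightarrow> 'a set set \<Rightarrow> bool" where
  "connected_graph V E \<longleftrightarrow> (\<forall>x\<in>V. \<forall>y\<in>V. (x, y) \<in> (edge_rel V E)\<^sup>*)"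

definition complete_graph :: "'a set \<Rightarrow> 'a set set \<Rightarrow> bool" where
  "complete_graph V E \<longleftrightarrow> (\<forall>x\<in>V. \<forall>y\<in>V. x \<noteq> y \<longrightarrow> {x, y} \<in> E)"

definition connectivity :: "'a set \<Rightarrow> 'a set set \<Rightarrow> nat" where
  "connectivity V E =
     (if complete_graph V E then card V - 1
      else Min {card S | S. S \<subseteq> V \<and> \<not> connected_graph (V - S) E})"

definition molecule_V :: "'a \<Rightarrow> 'a \<Rightarrow> 'a \<Rightarrow> (nat \<Rightarrow> 'a) \<Rightarrow> nat \<Rightarrow> 'a set" where
  "molecule_V a b c v h = {a, b, c} \<union> v ` {1..h}"

definition molecule_E :: "'a \<Rightarrow> 'a \<Rightarrow> 'a \<Rightarrow> 'a set set \<Rightarrow> (nat \<Rightarrow> 'a) \<Rightarrow> nat \<Rightarrow> 'a set set" where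
  "molecule_E a b c Bs v h = Bs \<union> {{v i, x} | i x. i \<in> {1..h} \<and> x \<in> {a, b, c}}"

text \<open>2-sum of two graphs along an edge e present in both, where the two graphs
  already share exactly the two endpoints of e (identification done by naming).\<close>
definition two_sum :: "'a set \<times> 'a set set \<Rightarrow> 'a set \<times> 'a set set \<Rightarrow> 'a set \<Rightarrow> 'a set \<times> 'a set set" where
  "two_sum G1 G2 e = (fst G1 \<union> fst G2, (snd G1 - {e}) \<union> (snd G2 - {e}))"

text \<open>Edge cover sets (sets of vertices meeting every edge) and minimal (= minimum
  cardinality) ones.\<close>
definition edge_cover_set :: "'a set \<Rightarrow> 'a set set \<Rightarrow> 'a set \<Rightarrow> bool" where
  "edge_cover_set V E S \<longleftrightarrow> S \<subseteq> V \<and> (\<forall>e\<in>E. e \<inter> S \<noteq> {})"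

definition min_edge_cover_set :: "'a set \<Rightarrow> 'a set set \<Rightarrow> 'a set \<Rightarrow> bool" where
  "min_edge_cover_set V E S \<longleftrightarrow> edge_cover_set V E S \<and>
     card S = Min {card T | T. edge_cover_set V E T}"

text \<open>Since the Thief never stands on a cop, cops
  always occupy distinct vertices, so a cop configuration is a set of vertices.
  A Cops strategy maps the history of Thief positions [t_0,...,t_n] (t_n the
  current Thief position) to the set of occupied vertices after the Cops' move
  in that round.\<close>

definition prev_cops :: "('a list \<Rightarrow> 'a set) \<Rightarrow> 'a list \<Rightarrow> 'a set" where
  "prev_cops \<sigma> ts = (if length ts \<le> 1 then {} else \<sigma> (butlast ts))"

definition legal_cop_strategy :: "nat \<Rightarrow> ('a list \<Rightarrow> 'a set) \<Rightarrow> bool" where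
  "legal_cop_strategy k \<sigma> \<longleftrightarrow>
     (\<forall>ts. ts \<noteq> [] \<longrightarrow>
        (let C = prev_cops \<sigma> ts; x = last ts in
           \<sigma> ts = C
         \<or> (card C < k \<and> \<sigma> ts = insert x C)
         \<or> (\<exists>u\<in>C. \<sigma> ts = insert x (C - {u}))))"

definition thief_escapes :: "'a set \<Rightarrow> 'a set set \<Rightarrow> ('a list \<Rightarrow> 'a set) \<Rightarrow> (nat \<Rightarrow> 'a) \<Rightarrow> bool" where
  "thief_escapes V E \<sigma> t \<longleftrightarrow> t 0 \<in> V \<and>
     (\<forall>n. t (Suc n) \<in> V \<and> t n \<noteq> t (Suc n) \<and> {t n, t (Suc n)} \<in> E \<and>
          t (Suc n) \<notin> \<sigma> (map t [0..<Suc n]))"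

definition cops_win :: "'a set \<Rightarrow> 'a set set \<Rightarrow> nat \<Rightarrow> bool" where
  "cops_win V E k \<longleftrightarrow> (\<exists>\<sigma>. legal_cop_strategy k \<sigma> \<and> (\<nexists>t. thief_escapes V E \<sigma> t))"

definition entanglement :: "'a set \<times> 'a set set \<Rightarrow> nat" where
  "entanglement G = (LEAST k. cops_win (fst G) (snd G) k)"

end

theory Submission
  imports Defs
begin

definition opt :: "nat \<Rightarrow> 'v \<Rightarrow> 'v set \<Rightarrow> 'v set \<Rightarrow> bool" where
  "opt k x C D \<longleftrightarrow> D = C \<or> (card C < k \<and> D = insert x C) \<or> (\<exists>u\<in>C. D = insert x (C - {u}))"

lemma legal_opt:
  assumes "legal_cop_strategy k \<sigma>" "ts \<noteq> []"
  shows "opt k (last ts) (prev_cops \<sigma> ts) (\<sigma> ts)"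
  using assms unfolding legal_cop_strategy_def opt_def Let_def by metis

lemma thief_wins:
  fixes Good :: "'v \<Rightarrow> 'v set \<Rightarrow> bool"
  assumes x0: "x0 \<in> V" and init: "Good x0 {}"
    and step: "\<And>x C D. Good x C \<Longrightarrow> opt k x C D \<Longrightarrow>
                 \<exists>y. y \<in> V \<and> y \<noteq> x \<and> {x,y} \<in> E \<and> y \<notin> D \<and> Good y D"
  shows "\<not> cops_win V E k"
proof
  assume "cops_win V E k"
  then obtain \<sigma> where leg: "legal_cop_strategy k \<sigma>" and ne: "\<nexists>t. thief_escapes V E \<sigma> t"
    unfolding cops_win_def by blast
  define Q where "Q ts y \<longleftrightarrow> y \<in> V \<and> y \<noteq> last ts \<and> {last ts, y} \<in> E \<and> y \<notin> \<sigma> ts \<and> Good y (\<sigma> ts)" for ts y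
  define nxt where "nxt ts = (SOME y. Q ts y)" for ts
  define L where "L n = rec_nat [x0] (\<lambda>_ l. l @ [nxt l]) n" for n
  have L0: "L 0 = [x0]" and LS: "L (Suc n) = L n @ [nxt (L n)]" for n by (simp_all add: L_def)
  define t where "t n = last (L n)" for n
  have inv: "L n \<noteq> [] \<and> Good (last (L n)) (prev_cops \<sigma> (L n)) \<and> L n = map t [0..<Suc n]" for n
  proof (induction n)
    case 0 thus ?case using init by (simp add: L0 prev_cops_def t_def)
  next
    case (Suc n)
    hence g: "Good (last (L n)) (prev_cops \<sigma> (L n))" and nn: "L n \<noteq> []" by auto
    have "\<exists>y. Q (L n) y" using step[OF g legal_opt[OF leg nn]] unfolding Q_def by blast
    hence q: "Q (L n) (nxt (L n))" unfolding nxt_def by (rule someI_ex)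
    have pc: "prev_cops \<sigma> (L (Suc n)) = \<sigma> (L n)" using nn by (simp add: LS prev_cops_def)
    have e1: "L (Suc n) = L n @ [t (Suc n)]" by (simp add: LS t_def)
    have M: "L (Suc n) = map t [0..<Suc (Suc n)]" unfolding e1 using Suc.IH by simp
    have la: "last (L (Suc n)) = nxt (L n)" by (simp add: LS)
    have gg: "Good (nxt (L n)) (\<sigma> (L n))" using q unfolding Q_def by blast
    have A: "L (Suc n) \<noteq> []" by (simp add: LS)
    have B: "Good (last (L (Suc n))) (prev_cops \<sigma> (L (Suc n)))" unfolding pc la by (rule gg)
    show ?case using A B M by blast
  qed
  have "thief_escapes V E \<sigma> t"
    unfolding thief_escapes_def
  proof (intro conjI allI)
    show "t 0 \<in> V" using x0 by (simp add: t_def L0)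
    fix n
    have nn: "L n \<noteq> []" using inv by blast
    have "\<exists>y. Q (L n) y" using step[OF conjunct1[OF conjunct2[OF inv]] legal_opt[OF leg nn]] unfolding Q_def by blast
    hence q: "Q (L n) (nxt (L n))" unfolding nxt_def by (rule someI_ex)
    have ts: "t (Suc n) = nxt (L n)" "t n = last (L n)" by (simp_all add: t_def LS)
    have m: "map t [0..<Suc n] = L n" using inv by metis
    show "t (Suc n) \<in> V" "t n \<noteq> t (Suc n)" "{t n, t (Suc n)} \<in> E" "t (Suc n) \<notin> \<sigma> (map t [0..<Suc n])"
      using q unfolding ts m Q_def by auto
  qed
  thus False using ne by blast
qed

lemma cops_win_card:
  assumes fin: "finite V" and ne: "V \<noteq> {}"
  shows "cops_win V E (card V)"
proof -
  define \<sigma> where "\<sigma> ts = set ts \<inter> V" for ts :: "'a list"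
  have leg: "legal_cop_strategy (card V) \<sigma>"
    unfolding legal_cop_strategy_def Let_def
  proof (intro allI impI)
    fix ts :: "'a list" assume "ts \<noteq> []"
    then obtain xs x where ts: "ts = xs @ [x]" by (metis append_butlast_last_id)
    have C: "prev_cops \<sigma> ts = set xs \<inter> V"
      by (cases xs) (auto simp: prev_cops_def \<sigma>_def ts)
    have s: "\<sigma> ts = insert x (set xs) \<inter> V" by (simp add: \<sigma>_def ts)
    show "\<sigma> ts = prev_cops \<sigma> ts \<or> card (prev_cops \<sigma> ts) < card V \<and> \<sigma> ts = insert (last ts) (prev_cops \<sigma> ts) \<or>
       (\<exists>u\<in>prev_cops \<sigma> ts. \<sigma> ts = insert (last ts) (prev_cops \<sigma> ts - {u}))"
    proof (cases "x \<in> V \<and> x \<notin> set xs")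
      case True
      hence "set xs \<inter> V \<subset> V" by auto
      hence "card (set xs \<inter> V) < card V" by (rule psubset_card_mono[OF fin])
      thus ?thesis using True unfolding C s by (auto simp: ts)
    next
      case False thus ?thesis unfolding C s by (auto simp: ts)
    qed
  qed
  have "\<nexists>t. thief_escapes V E \<sigma> t"
  proof
    assume "\<exists>t. thief_escapes V E \<sigma> t"
    then obtain t where te: "thief_escapes V E \<sigma> t" by blast
    have t0: "t 0 \<in> V" and tS: "\<And>n. t (Suc n) \<in> V \<and> t n \<noteq> t (Suc n) \<and> {t n, t (Suc n)} \<in> E \<and>
          t (Suc n) \<notin> \<sigma> (map t [0..<Suc n])" using te unfolding thief_escapes_def by blast+
    have d: "t n \<noteq> t m" if "m < n" for m n
    proof -
      have "0 < n" using that by simp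
      then obtain p where n: "n = Suc p" using gr0_implies_Suc by blast
      have 1: "t (Suc p) \<notin> set (map t [0..<Suc p]) \<inter> V" "t (Suc p) \<in> V"
        using tS[of p] unfolding \<sigma>_def by blast+
      have "m < Suc p" using that n by simp
      hence "m \<in> set [0..<Suc p]" by (simp only: set_upt atLeastLessThan_iff) simp
      hence 2: "t m \<in> set (map t [0..<Suc p])" unfolding set_map by (rule imageI)
      show ?thesis using 1 2 n by (metis IntI)
    qed
    have "inj t"
    proof (rule injI)
      fix m n assume e: "t m = t n"
      show "m = n"
      proof (rule linorder_cases[of m n])
        assume "m < n" thus ?thesis using d[of m n] e by simp
      next
        assume "n < m" thus ?thesis using d[of n m] e by simp
      qed
    qed
    moreover have "t n \<in> V" for n
    proof (cases n)
      case 0 thus ?thesis using t0 by simp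
    next
      case (Suc p) thus ?thesis using tS[of p] by simp
    qed
    hence "range t \<subseteq> V" by blast
    hence "finite (range t)" using fin finite_subset by blast
    ultimately have "finite (UNIV :: nat set)" using finite_imageD by blast
    thus False by simp
  qed
  thus ?thesis using leg unfolding cops_win_def by blast
qed

definition nbl :: "(nat\<times>nat) list \<Rightarrow> nat \<Rightarrow> nat list" where
  "nbl EL x = map snd (filter (\<lambda>p. fst p = x) EL) @ map fst (filter (\<lambda>p. snd p = x) EL)"
definition Pn :: "(nat\<times>nat) list \<Rightarrow> nat \<Rightarrow> nat set \<Rightarrow> bool" where
  "Pn EL x D = (\<exists>y\<in>set (nbl EL x). y \<notin> D \<and> \<not> set (nbl EL y) \<subseteq> D)"
definition chk :: "nat \<Rightarrow> (nat\<times>nat) list \<Rightarrow> bool" where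
  "chk n EL = ((\<forall>C\<in>set (map set (subseqs [0..<n])). card C \<le> 3 \<longrightarrow>
     (\<forall>x\<in>set [0..<n]. x \<notin> C \<longrightarrow> \<not> set (nbl EL x) \<subseteq> C \<longrightarrow>
        Pn EL x C \<and> (card C < 3 \<longrightarrow> Pn EL x (insert x C)) \<and> (\<forall>u\<in>C. Pn EL x (insert x (C - {u})))))
    \<and> (\<forall>p\<in>set EL. fst p < n \<and> snd p < n \<and> fst p \<noteq> snd p))"
definition GoodH :: "nat \<Rightarrow> (nat\<times>nat) list \<Rightarrow> nat \<Rightarrow> nat set \<Rightarrow> bool" where
  "GoodH n EL x D \<longleftrightarrow> x < n \<and> D \<subseteq> {..<n} \<and> x \<notin> D \<and> card D \<le> 3 \<and> \<not> set (nbl EL x) \<subseteq> D"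

lemma nbl_iff: "y \<in> set (nbl EL x) \<longleftrightarrow> (x,y) \<in> set EL \<or> (y,x) \<in> set EL"
  unfolding nbl_def by force

lemma stepH:
  assumes c: "chk n EL" and g: "GoodH n EL x D" and o: "opt k x D D'" and k: "k \<le> 3"
  shows "\<exists>y. y \<in> set (nbl EL x) \<and> y \<notin> D' \<and> GoodH n EL y D'"
proof -
  have xn: "x < n" and Dn: "D \<subseteq> {..<n}" and xD: "x \<notin> D" and cD: "card D \<le> 3"
    and nx: "\<not> set (nbl EL x) \<subseteq> D" using g unfolding GoodH_def by auto
  have fD: "finite D" using Dn finite_subset by blast
  have "D \<subseteq> set [0..<n]" using Dn by auto
  hence Dm: "D \<in> set (map set (subseqs [0..<n]))" using subset_subseqs by (metis set_map)
  have c1: "card D \<le> 3 \<longrightarrow> (\<forall>x\<in>set [0..<n]. x \<notin> D \<longrightarrow> \<not> set (nbl EL x) \<subseteq> D \<longrightarrow>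
        Pn EL x D \<and> (card D < 3 \<longrightarrow> Pn EL x (insert x D)) \<and> (\<forall>u\<in>D. Pn EL x (insert x (D - {u}))))"
    using c Dm unfolding chk_def by blast
  have c2: "\<forall>p\<in>set EL. fst p < n \<and> snd p < n \<and> fst p \<noteq> snd p" using c unfolding chk_def by blast
  have P: "Pn EL x D \<and> (card D < 3 \<longrightarrow> Pn EL x (insert x D)) \<and> (\<forall>u\<in>D. Pn EL x (insert x (D - {u})))"
    using c1 cD xn xD nx by auto
  have PD': "Pn EL x D'" and sub: "D' \<subseteq> insert x D" and cD': "card D' \<le> 3"
  proof -
    have "(Pn EL x D' \<and> D' \<subseteq> insert x D) \<and> card D' \<le> 3"
    proof (cases "D' = D")
      case True thus ?thesis using P cD by auto
    next
      case False
      show ?thesis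
      proof (cases "card D < k \<and> D' = insert x D")
        case True thus ?thesis using P k fD xD by auto
      next
        case False2: False
        then obtain u where u: "u \<in> D" "D' = insert x (D - {u})" using o False unfolding opt_def by blast
        have "card (D - {u}) < card D" using u(1) fD by (meson card_Diff1_less)
        hence "card D' \<le> 3" using u fD cD by (simp add: card_insert_if)
        thus ?thesis using P u by auto
      qed
    qed
    thus "Pn EL x D'" "D' \<subseteq> insert x D" "card D' \<le> 3" by auto
  qed
  obtain y where y: "y \<in> set (nbl EL x)" "y \<notin> D'" "\<not> set (nbl EL y) \<subseteq> D'"
    using PD' unfolding Pn_def by blast
  have yn: "y < n" using y(1) c2 unfolding nbl_iff by auto
  have "GoodH n EL y D'" unfolding GoodH_def using yn y sub xn Dn cD' by auto
  thus ?thesis using y by blast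
qed

lemma transfer:
  fixes f :: "nat \<Rightarrow> 'v"
  assumes c: "chk n EL" and inj: "inj_on f {..<n}"
    and edges: "\<forall>p\<in>set EL. {f (fst p), f (snd p)} \<in> E"
    and fV: "f ` {..<n} \<subseteq> V" and x0: "x0 < n" "nbl EL x0 \<noteq> []" and k: "k \<le> 3"
  shows "\<not> cops_win V E k"
proof (rule thief_wins[where Good = "\<lambda>x C. \<exists>x' D. x = f x' \<and> C = f ` D \<and> GoodH n EL x' D" and ?x0.0 = "f x0"])
  show "f x0 \<in> V" using fV x0 by auto
  show "\<exists>x' D. f x0 = f x' \<and> {} = f ` D \<and> GoodH n EL x' D"
    using x0 by (intro exI[of _ x0] exI[of _ "{}"]) (auto simp: GoodH_def)
  fix x C C''
  assume "\<exists>x' D. x = f x' \<and> C = f ` D \<and> GoodH n EL x' D" and o: "opt k x C C''"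
  then obtain x' D where xx: "x = f x'" and CC: "C = f ` D" and g: "GoodH n EL x' D" by blast
  have x'n: "x' < n" and Dn: "D \<subseteq> {..<n}" and x'D: "x' \<notin> D" using g unfolding GoodH_def by auto
  have injD: "inj_on f D" using inj Dn inj_on_subset by blast
  have "\<exists>D'. C'' = f ` D' \<and> opt k x' D D'"
  proof -
    consider "C'' = C" | "card C < k \<and> C'' = insert x C" | u where "u \<in> C" "C'' = insert x (C - {u})"
      using o unfolding opt_def by blast
    thus ?thesis
    proof cases
      case 1 thus ?thesis using CC by (auto simp: opt_def)
    next
      case 2
      have "card C = card D" using CC injD by (simp add: card_image)
      thus ?thesis using 2 CC xx by (intro exI[of _ "insert x' D"]) (auto simp: opt_def)
    next
      case 3
      then obtain w where w: "w \<in> D" "u = f w" using CC by blast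
      have "f ` (D - {w}) = f ` D - f ` {w}" using inj Dn w by (intro inj_on_image_set_diff[of f "{..<n}"]) auto
      hence "C'' = f ` (insert x' (D - {w}))" using 3 CC xx w by auto
      thus ?thesis using w by (intro exI[of _ "insert x' (D - {w})"]) (auto simp: opt_def)
    qed
  qed
  then obtain D' where D': "C'' = f ` D'" "opt k x' D D'" by blast
  obtain y' where y': "y' \<in> set (nbl EL x')" "y' \<notin> D'" "GoodH n EL y' D'"
    using stepH[OF c g D'(2) k] by blast
  have y'n: "y' < n" and D'n: "D' \<subseteq> {..<n}" using y'(3) unfolding GoodH_def by auto
  have c2: "\<forall>p\<in>set EL. fst p < n \<and> snd p < n \<and> fst p \<noteq> snd p" using c unfolding chk_def by blast
  have ne: "y' \<noteq> x'" using y'(1) c2 unfolding nbl_iff by auto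
  have e: "{x, f y'} \<in> E"
  proof -
    have "(x',y') \<in> set EL \<or> (y',x') \<in> set EL" using y'(1) nbl_iff by metis
    thus ?thesis using edges xx by (auto simp: insert_commute)
  qed
  have "f y' \<noteq> x" using inj ne x'n y'n xx unfolding inj_on_def by auto
  moreover have "f y' \<notin> C''" using inj_on_image_mem_iff[OF inj _ D'n] y'n y'(2) D'(1) by auto
  moreover have "f y' \<in> V" using fV y'n by auto
  ultimately show "\<exists>y. y \<in> V \<and> y \<noteq> x \<and> {x, y} \<in> E \<and> y \<notin> C'' \<and> (\<exists>x' D. y = f x' \<and> C'' = f ` D \<and> GoodH n EL x' D)"
    using e D'(1) y'(3) by blast
qed

definition EL1 :: "(nat\<times>nat) list" where
  "EL1 = [(3,1),(3,2),(4,1),(4,2),(5,1),(5,2),(4,0),(5,0),(3,6),(0,6)]"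
definition EL2 :: "(nat\<times>nat) list" where
  "EL2 = [(3,1),(3,2),(4,0),(4,1),(4,2),(3,5),(0,5),(0,1),(1,2)]"
lemma chk1: "chk 7 EL1" by code_simp
lemma chk2: "chk 6 EL2" by code_simp

lemma not_conn:
  assumes "x \<in> W" "y \<in> W" "x \<noteq> y" "\<forall>w\<in>W. w \<noteq> x \<longrightarrow> {x,w} \<notin> E"
  shows "\<not> connected_graph W E"
proof
  assume "connected_graph W E"
  hence "(x,y) \<in> (edge_rel W E)\<^sup>*" using assms unfolding connected_graph_def by blast
  thus False
    by (rule converse_rtranclE) (use assms in \<open>auto simp: edge_rel_def\<close>)
qed

lemma conn_le:
  assumes "finite V" "\<not> complete_graph V E" "S \<subseteq> V" "\<not> connected_graph (V - S) E"
  shows "connectivity V E \<le> card S"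
proof -
  have "{card S | S. S \<subseteq> V \<and> \<not> connected_graph (V - S) E} \<subseteq> card ` Pow V" by blast
  hence fin: "finite {card S | S. S \<subseteq> V \<and> \<not> connected_graph (V - S) E}"
    using assms(1) finite_subset by blast
  have "card S \<in> {card S | S. S \<subseteq> V \<and> \<not> connected_graph (V - S) E}" using assms by blast
  thus ?thesis unfolding connectivity_def using assms(2) Min_le[OF fin] by simp
qed

lemma min_cover_intro:
  assumes "finite V" "edge_cover_set V E S" "card S = 3" "\<And>T. edge_cover_set V E T \<Longrightarrow> 3 \<le> card T"
  shows "min_edge_cover_set V E S"
proof -
  have "{card T | T. edge_cover_set V E T} \<subseteq> card ` Pow V" unfolding edge_cover_set_def by blast
  hence fin: "finite {card T | T. edge_cover_set V E T}" using assms(1) finite_subset by blast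
  have "Min {card T | T. edge_cover_set V E T} = 3"
    by (rule Min_eqI[OF fin]) (use assms in auto)
  thus ?thesis unfolding min_edge_cover_set_def using assms by simp
qed

lemma card3: "finite T \<Longrightarrow> p \<in> T \<Longrightarrow> q \<in> T \<Longrightarrow> r \<in> T \<Longrightarrow> p \<noteq> q \<Longrightarrow> p \<noteq> r \<Longrightarrow> q \<noteq> r \<Longrightarrow> 3 \<le> card T"
  using card_mono[of T "{p,q,r}"] by auto

lemma transfer_list:
  fixes L :: "'v list"
  assumes c: "chk (length L) EL" and d: "distinct L"
    and edges: "\<forall>p\<in>set EL. {L ! fst p, L ! snd p} \<in> E"
    and fV: "set L \<subseteq> V" and x0: "0 < length L" "nbl EL 0 \<noteq> []" and k: "k \<le> 3"
  shows "\<not> cops_win V E k"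
proof (rule transfer[OF c _ edges _ x0 k])
  have "inj_on ((!) L) (set [0..<length L])" using d by (metis distinct_map map_nth)
  thus "inj_on ((!) L) {..<length L}" by (simp add: atLeast0LessThan)
  have "(!) L ` {..<length L} = set L" by (metis atLeast0LessThan list.set_map map_nth set_upt)
  thus "(!) L ` {..<length L} \<subseteq> V" using fV by simp
qed


theorem mainTheorem11:
  fixes a b c z :: 'a and v :: "nat \<Rightarrow> 'a" and h :: nat and Bs :: "'a set set"
  assumes "distinct [a, b, c]"
    and "inj_on v {1..h}"
    and "v ` {1..h} \<inter> {a, b, c} = {}"
    and "z \<notin> molecule_V a b c v h"
    and "Bs \<subseteq> {{a, b}, {b, c}, {a, c}}"
    and "h \<ge> 1"
    and "h + connectivity {a, b, c} Bs \<ge> 3"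
    and "\<not> (\<exists>S. min_edge_cover_set (molecule_V a b c v h) (molecule_E a b c Bs v h) S
               \<and> {a, v 1} \<subseteq> S)"
  shows "entanglement
           (two_sum ({a, v 1, z}, {{a, v 1}, {v 1, z}, {a, z}})
                    (molecule_V a b c v h, molecule_E a b c Bs v h) {a, v 1}) \<ge> 4"
proof -
  note abc = assms(1) and injv = assms(2) and vabc = assms(3) and zV = assms(4) and Bs = assms(5)
    and h1 = assms(6) and conn = assms(7) and nocov = assms(8)
  define MV where "MV = molecule_V a b c v h"
  define ME where "ME = molecule_E a b c Bs v h"
  define V where "V = {a, v 1, z} \<union> MV"
  define E where "E = ({{a, v 1}, {v 1, z}, {a, z}} - {{a, v 1}}) \<union> (ME - {{a, v 1}})"
  have G: "two_sum ({a, v 1, z}, {{a, v 1}, {v 1, z}, {a, z}}) (molecule_V a b c v h, molecule_E a b c Bs v h) {a, v 1} = (V, E)"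
    by (simp add: two_sum_def V_def E_def MV_def ME_def)
  have finMV: "finite MV" by (simp add: MV_def molecule_V_def)
  have finV: "finite V" using finMV by (simp add: V_def)
  have vi: "v i \<noteq> a \<and> v i \<noteq> b \<and> v i \<noteq> c" if "i \<in> {1..h}" for i using vabc that by blast
  have vij: "v i \<noteq> v j" if "i \<in> {1..h}" "j \<in> {1..h}" "i \<noteq> j" for i j using injv that unfolding inj_on_def by blast
  have zz: "z \<noteq> a" "z \<noteq> b" "z \<noteq> c" using zV by (auto simp: molecule_V_def)
  have zv: "z \<noteq> v i" if "i \<in> {1..h}" for i using zV that by (auto simp: molecule_V_def)
  have MVi: "v i \<in> MV" if "i \<in> {1..h}" for i using that by (simp add: MV_def molecule_V_def)
  have MVabc: "a \<in> MV" "b \<in> MV" "c \<in> MV" by (simp_all add: MV_def molecule_V_def)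
  have mE: "{v i, x} \<in> ME" if "i \<in> {1..h}" "x \<in> {a,b,c}" for i x
    using that unfolding ME_def molecule_E_def by blast
  have BsME: "Bs \<subseteq> ME" unfolding ME_def molecule_E_def by blast
  have v1: "1 \<in> {1..h}" using h1 by simp
  have mEE: "{v i, x} \<in> E" if "i \<in> {1..h}" "x \<in> {a,b,c}" "{v i, x} \<noteq> {a, v 1}" for i x
    using mE[OF that(1,2)] that(3) unfolding E_def by blast
  have BsE: "e \<in> E" if "e \<in> Bs" for e
  proof -
    have "e \<noteq> {a, v 1}" using that Bs vi[OF v1] by (auto simp: doubleton_eq_iff)
    thus ?thesis using that BsME unfolding E_def by blast
  qed
  have zE: "{v 1, z} \<in> E" "{a, z} \<in> E" using zz zv[OF v1] vi[OF v1] unfolding E_def by (auto simp: doubleton_eq_iff)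
  have finabc: "finite {a,b,c}" by simp
  have Ebc: "{v i, x} \<in> E" if "i \<in> {1..h}" "x \<in> {b,c}" for i x
  proof (rule mEE)
    show "i \<in> {1..h}" "x \<in> {a,b,c}" using that by auto
    have "x \<noteq> a" "v i \<noteq> a" using that abc vi[OF that(1)] by auto
    thus "{v i, x} \<noteq> {a, v 1}" by (auto simp: doubleton_eq_iff)
  qed
  have Ea: "{v i, a} \<in> E" if "i \<in> {1..h}" "i \<noteq> 1" for i
  proof (rule mEE)
    show "i \<in> {1..h}" "a \<in> {a,b,c}" using that by auto
    have "v i \<noteq> v 1" "v i \<noteq> a" using vij[OF that(1) v1 that(2)] vi[OF that(1)] by auto
    thus "{v i, a} \<noteq> {a, v 1}" by (auto simp: doubleton_eq_iff)
  qed
  have cases: "h \<ge> 3 \<or> (h = 2 \<and> {a,b} \<in> Bs \<and> {b,c} \<in> Bs) \<or> (h = 2 \<and> {a,c} \<in> Bs \<and> {b,c} \<in> Bs)"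
  proof (rule ccontr)
    assume nc: "\<not> ?thesis"
    have ecov: "edge_cover_set MV ME T \<longleftrightarrow> T \<subseteq> MV \<and> (\<forall>e\<in>ME. e \<inter> T \<noteq> {})" for T
      by (simp add: edge_cover_set_def)
    have finT: "finite T" if "edge_cover_set MV ME T" for T
      using that finMV finite_subset unfolding edge_cover_set_def by blast
    have hit: "p \<in> T \<or> q \<in> T" if "edge_cover_set MV ME T" "{p,q} \<in> ME" for T p q
    proof -
      have "\<forall>e\<in>ME. e \<inter> T \<noteq> {}" using that(1) unfolding edge_cover_set_def by (rule conjunct2)
      hence "{p,q} \<inter> T \<noteq> {}" using that(2) by (rule bspec)
      thus ?thesis by blast
    qed
    show False
    proof (cases "h = 1")
      case True
      have cplt: "complete_graph {a,b,c} Bs"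
      proof (rule ccontr)
        assume ncp: "\<not> complete_graph {a,b,c} Bs"
        then obtain x y where xy: "x \<in> {a,b,c}" "y \<in> {a,b,c}" "x \<noteq> y" "{x,y} \<notin> Bs"
          unfolding complete_graph_def by blast
        have "\<exists>w. w \<in> {a,b,c} \<and> w \<noteq> x \<and> w \<noteq> y"
        proof (cases "x \<noteq> a \<and> y \<noteq> a")
          case True thus ?thesis by blast
        next
          case F1: False
          show ?thesis
          proof (cases "x \<noteq> b \<and> y \<noteq> b")
            case True thus ?thesis by blast
          next
            case False
            hence "x \<noteq> c \<and> y \<noteq> c" using F1 xy(3) abc by auto
            thus ?thesis by blast
          qed
        qed
        then obtain w where w: "w \<in> {a,b,c}" "w \<noteq> x" "w \<noteq> y" by blast
        have eq: "{a,b,c} - {w} = {x,y}" using xy w abc by auto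
        have "\<not> connected_graph ({a,b,c} - {w}) Bs"
          unfolding eq by (rule not_conn) (use xy in \<open>auto simp: insert_commute\<close>)
        hence "connectivity {a,b,c} Bs \<le> card {w}" using conn_le[OF finabc ncp] w by blast
        thus False using conn True by simp
      qed
      hence tri: "{a,b} \<in> Bs" "{b,c} \<in> Bs" "{a,c} \<in> Bs" using abc unfolding complete_graph_def by auto
      have "min_edge_cover_set MV ME {a, v 1, b}"
      proof (rule min_cover_intro[OF finMV])
        show "card {a, v 1, b} = 3" using abc vi[OF v1] by (auto simp: card_insert_if)
        have "e \<inter> {a, v 1, b} \<noteq> {}" if "e \<in> ME" for e
          using that Bs True unfolding ME_def molecule_E_def by auto
        thus "edge_cover_set MV ME {a, v 1, b}" using MVabc MVi[OF v1] unfolding edge_cover_set_def by auto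
        fix T assume T: "edge_cover_set MV ME T"
        have e1: "a \<in> T \<or> b \<in> T" "b \<in> T \<or> c \<in> T" "a \<in> T \<or> c \<in> T"
          using hit[OF T] tri BsME by blast+
        have e2: "v 1 \<in> T \<or> x \<in> T" if "x \<in> {a,b,c}" for x using hit[OF T mE[OF v1 that]] .
        have e2a: "v 1 \<in> T \<or> a \<in> T" "v 1 \<in> T \<or> b \<in> T" "v 1 \<in> T \<or> c \<in> T" using e2 by simp_all
        have fT: "finite T" using finT[OF T] .
        have dd: "a \<noteq> b" "a \<noteq> c" "b \<noteq> c" "a \<noteq> v 1" "b \<noteq> v 1" "c \<noteq> v 1" using abc vi[OF v1] by auto
        consider "a \<in> T" "b \<in> T" "c \<in> T" | "a \<in> T" "b \<in> T" "v 1 \<in> T" | "a \<in> T" "c \<in> T" "v 1 \<in> T"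
          | "b \<in> T" "c \<in> T" "v 1 \<in> T" using e1 e2a by blast
        thus "3 \<le> card T"
        proof cases
          case 1 thus ?thesis using card3[OF fT] dd by blast
        next
          case 2 thus ?thesis using card3[OF fT] dd by blast
        next
          case 3 thus ?thesis using card3[OF fT] dd by blast
        next
          case 4 thus ?thesis using card3[OF fT] dd by blast
        qed
      qed
      thus False using nocov unfolding MV_def ME_def by blast
    next
      case False
      hence h2: "h = 2" using nc h1 by auto
      have v2: "2 \<in> {1..h}" using h2 by simp
      have bc: "{b,c} \<in> Bs"
      proof (rule ccontr)
        assume nbc: "{b,c} \<notin> Bs"
        show False
        proof (cases "{a,b} \<in> Bs \<and> {a,c} \<in> Bs")
          case True
          have "min_edge_cover_set MV ME {a, v 1, v 2}"
          proof (rule min_cover_intro[OF finMV])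
            show "card {a, v 1, v 2} = 3" using vi[OF v1] vi[OF v2] vij[OF v1 v2] by (auto simp: card_insert_if)
            have "e \<inter> {a, v 1, v 2} \<noteq> {}" if "e \<in> ME" for e
            proof -
              from that consider "e \<in> Bs" | i x where "i \<in> {1..h}" "e = {v i, x}"
                unfolding ME_def molecule_E_def by blast
              thus ?thesis
              proof cases
                case 1 thus ?thesis using Bs nbc by auto
              next
                case 2
                hence "i = 1 \<or> i = 2" using h2 by auto
                thus ?thesis using 2 by auto
              qed
            qed
            thus "edge_cover_set MV ME {a, v 1, v 2}" using MVabc MVi[OF v1] MVi[OF v2] unfolding edge_cover_set_def by auto
            fix T assume T: "edge_cover_set MV ME T"
            have e1: "a \<in> T \<or> b \<in> T" "a \<in> T \<or> c \<in> T"
              using hit[OF T] True BsME by blast+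
            have e2: "v 1 \<in> T \<or> x \<in> T" "v 2 \<in> T \<or> x \<in> T" if "x \<in> {a,b,c}" for x
              using hit[OF T mE[OF v1 that]] hit[OF T mE[OF v2 that]] by auto
            have d: "v 1 \<noteq> v 2" using vij[OF v1 v2] by simp
            have e2a: "v 1 \<in> T \<or> a \<in> T" "v 1 \<in> T \<or> b \<in> T" "v 2 \<in> T \<or> b \<in> T" "v 1 \<in> T \<or> c \<in> T" using e2 by simp_all
            have fT: "finite T" using finT[OF T] .
            have dd: "a \<noteq> b" "a \<noteq> c" "b \<noteq> c" "a \<noteq> v 1" "b \<noteq> v 1" "c \<noteq> v 1" "a \<noteq> v 2" "v 1 \<noteq> v 2"
              using abc vi[OF v1] vi[OF v2] d by auto
            consider "a \<in> T" "b \<in> T" "c \<in> T" | "a \<in> T" "b \<in> T" "v 1 \<in> T" | "a \<in> T" "v 1 \<in> T" "v 2 \<in> T"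
              | "b \<in> T" "c \<in> T" "v 1 \<in> T" using e1 e2a by blast
            thus "3 \<le> card T"
            proof cases
              case 1 thus ?thesis using card3[OF fT] dd by blast
            next
              case 2 thus ?thesis using card3[OF fT] dd by blast
            next
              case 3 thus ?thesis using card3[OF fT] dd by blast
            next
              case 4 thus ?thesis using card3[OF fT] dd by blast
            qed
          qed
          thus False using nocov unfolding MV_def ME_def by blast
        next
          case False
          have "\<exists>x. x \<in> {b,c} \<and> (\<forall>w\<in>{a,b,c}. w \<noteq> x \<longrightarrow> {x,w} \<notin> Bs)"
          proof (cases "{a,b} \<in> Bs")
            case True
            hence "{a,c} \<notin> Bs" using False by blast
            hence "\<forall>w\<in>{a,b,c}. w \<noteq> c \<longrightarrow> {c,w} \<notin> Bs" using nbc by (auto simp: insert_commute)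
            thus ?thesis by blast
          next
            case F: False
            hence "\<forall>w\<in>{a,b,c}. w \<noteq> b \<longrightarrow> {b,w} \<notin> Bs" using nbc by (auto simp: insert_commute)
            thus ?thesis by blast
          qed
          then obtain x where x: "x \<in> {b,c}" "\<forall>w\<in>{a,b,c}. w \<noteq> x \<longrightarrow> {x,w} \<notin> Bs" by blast
          have ncp: "\<not> complete_graph {a,b,c} Bs" using nbc abc unfolding complete_graph_def by auto
          have "\<not> connected_graph ({a,b,c} - {}) Bs"
            using not_conn[of x "{a,b,c}" a Bs] x abc by auto
          hence "connectivity {a,b,c} Bs \<le> card ({}::'a set)" using conn_le[OF finabc ncp] by blast
          thus False using conn h2 by simp
        qed
      qed
      have "{a,b} \<in> Bs \<or> {a,c} \<in> Bs"
      proof (rule ccontr)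
        assume nab: "\<not> ?thesis"
        have ncp: "\<not> complete_graph {a,b,c} Bs" using nab abc unfolding complete_graph_def by auto
        have "\<not> connected_graph ({a,b,c} - {}) Bs"
          using not_conn[of a "{a,b,c}" b Bs] nab abc by (auto simp: insert_commute)
        hence "connectivity {a,b,c} Bs \<le> card ({}::'a set)" using conn_le[OF finabc ncp] by blast
        thus False using conn h2 by simp
      qed
      thus False using nc h2 bc by blast
    qed
  qed
  have nowin: "\<not> cops_win V E k" if k: "k \<le> 3" for k
  proof -
    consider "h \<ge> 3" | "h = 2" "{a,b} \<in> Bs" "{b,c} \<in> Bs" | "h = 2" "{a,c} \<in> Bs" "{b,c} \<in> Bs"
      using cases by blast
    thus ?thesis
    proof cases
      case 1
      have i: "1 \<in> {1..h}" "2 \<in> {1..h}" "3 \<in> {1..h}" using 1 by auto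
      show ?thesis
      proof (rule transfer_list[of "[a,b,c,v 1,v 2,v 3,z]" EL1])
        have ln: "length [a,b,c,v 1,v 2,v 3,z] = 7" by simp
        show "chk (length [a,b,c,v 1,v 2,v 3,z]) EL1" unfolding ln by (rule chk1)
        show "distinct [a,b,c,v 1,v 2,v 3,z]"
          using abc vi[OF i(1)] vi[OF i(2)] vi[OF i(3)] vij[OF i(1) i(2)] vij[OF i(1) i(3)] vij[OF i(2) i(3)]
            zz zv[OF i(1)] zv[OF i(2)] zv[OF i(3)] by simp metis
        show "\<forall>p\<in>set EL1. {[a,b,c,v 1,v 2,v 3,z] ! fst p, [a,b,c,v 1,v 2,v 3,z] ! snd p} \<in> E"
          using Ebc[OF i(1)] Ebc[OF i(2)] Ebc[OF i(3)] Ea[OF i(2)] Ea[OF i(3)] zE by (simp add: EL1_def)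
        show "set [a,b,c,v 1,v 2,v 3,z] \<subseteq> V" using MVabc MVi[OF i(1)] MVi[OF i(2)] MVi[OF i(3)] by (auto simp: V_def)
        show "0 < length [a,b,c,v 1,v 2,v 3,z]" by simp
        show "nbl EL1 0 \<noteq> []" by (simp add: nbl_def EL1_def)
      qed (rule k)
    next
      case 2
      have i: "1 \<in> {1..h}" "2 \<in> {1..h}" using 2 by auto
      show ?thesis
      proof (rule transfer_list[of "[a,b,c,v 1,v 2,z]" EL2])
        have ln: "length [a,b,c,v 1,v 2,z] = 6" by simp
        show "chk (length [a,b,c,v 1,v 2,z]) EL2" unfolding ln by (rule chk2)
        show "distinct [a,b,c,v 1,v 2,z]"
          using abc vi[OF i(1)] vi[OF i(2)] vij[OF i(1) i(2)] zz zv[OF i(1)] zv[OF i(2)] by auto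
        show "\<forall>p\<in>set EL2. {[a,b,c,v 1,v 2,z] ! fst p, [a,b,c,v 1,v 2,z] ! snd p} \<in> E"
          using Ebc[OF i(1)] Ebc[OF i(2)] Ea[OF i(2)] zE BsE[OF 2(2)] BsE[OF 2(3)] by (simp add: EL2_def)
        show "set [a,b,c,v 1,v 2,z] \<subseteq> V" using MVabc MVi[OF i(1)] MVi[OF i(2)] by (auto simp: V_def)
        show "0 < length [a,b,c,v 1,v 2,z]" by simp
        show "nbl EL2 0 \<noteq> []" by (simp add: nbl_def EL2_def)
      qed (rule k)
    next
      case 3
      have i: "1 \<in> {1..h}" "2 \<in> {1..h}" using 3 by auto
      show ?thesis
      proof (rule transfer_list[of "[a,c,b,v 1,v 2,z]" EL2])
        have ln: "length [a,c,b,v 1,v 2,z] = 6" by simp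
        show "chk (length [a,c,b,v 1,v 2,z]) EL2" unfolding ln by (rule chk2)
        show "distinct [a,c,b,v 1,v 2,z]"
          using abc vi[OF i(1)] vi[OF i(2)] vij[OF i(1) i(2)] zz zv[OF i(1)] zv[OF i(2)] by auto
        show "\<forall>p\<in>set EL2. {[a,c,b,v 1,v 2,z] ! fst p, [a,c,b,v 1,v 2,z] ! snd p} \<in> E"
          using Ebc[OF i(1)] Ebc[OF i(2)] Ea[OF i(2)] zE BsE[OF 3(2)] BsE[OF 3(3)] by (simp add: EL2_def insert_commute)
        show "set [a,c,b,v 1,v 2,z] \<subseteq> V" using MVabc MVi[OF i(1)] MVi[OF i(2)] by (auto simp: V_def)
        show "0 < length [a,c,b,v 1,v 2,z]" by simp
        show "nbl EL2 0 \<noteq> []" by (simp add: nbl_def EL2_def)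
      qed (rule k)
    qed
  qed
  have win: "cops_win V E (card V)" using cops_win_card[OF finV] by (simp add: V_def)
  have P: "cops_win V E (LEAST k. cops_win V E k)" using LeastI[of "cops_win V E", OF win] .
  show ?thesis unfolding G entanglement_def fst_conv snd_conv
  proof (rule ccontr)
    assume "\<not> 4 \<le> (LEAST k. cops_win V E k)"
    hence "(LEAST k. cops_win V E k) \<le> 3" by simp
    thus False using nowin P by blast
  qed
qed

end
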